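(* Let $b_0\in C^2([0,1])$ satisfy $\frac rd b_0'+b_0\ge0$ on $D$ and $b_0'(r)\le0$ for $r\in D$, and assume that the solution $b$ of problem (P) blows up at time $T<\infty$. Then $b(0,t)\ge (T-t)^{-1}$ for all $t\in[0,T)$.
   Context: Fix $d>2$, $\Theta>0$; $\chi_d$ is the volume of the unit ball in $\mathbb R^d$, $D=(0,1)$, $D_T=D\times(0,T)$. Problem (P): $b_t=\chi_d\Theta\big(b_{rr}+\frac{d+1}{r}b_r\big)+\frac1d r b b_r+b^2$ in $D_T$, $b_r(0,t)=0$, $b(1,t)=1$, $b(r,0)=b_0(r)$; $b$ is the classical solution on its maximal existence interval $[0,T)$, and blows up at $T$ if $T<\infty$ and $\sup_{[0,1]}b(\cdot,t)\to\infty$ as $t\to T$. *)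

theory Defs
  imports "HOL-Analysis.Analysis"
begin

definition chi :: "nat \<Rightarrow> real" where
  "chi d = unit_ball_vol (real d)"

definition classical_solution_P ::
  "nat \<Rightarrow> real \<Rightarrow> (real \<Rightarrow> real) \<Rightarrow> (real \<Rightarrow> real \<Rightarrow> real) \<Rightarrow> real \<Rightarrow> bool" where
  "classical_solution_P d \<Theta> b0 b T \<longleftrightarrow>
     continuous_on ({0..1} \<times> {0..<T}) (\<lambda>(r, t). b r t) \<and>
     (\<exists>bt br brr.
        (\<forall>r\<in>{0<..<1}. \<forall>t\<in>{0<..<T}.
           ((\<lambda>s. b r s) has_real_derivative bt r t) (at t) \<and>
           ((\<lambda>x. br x t) has_real_derivative brr r t) (at r) \<and>
           bt r t = chi d * \<Theta> * (brr r t + (real d + 1) / r * br r t)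
                    + r / real d * b r t * br r t + (b r t)\<^sup>2) \<and>
        (\<forall>r\<in>{0..<1}. \<forall>t\<in>{0<..<T}.
           ((\<lambda>x. b x t) has_real_derivative br r t) (at r within {0..1})) \<and>
        continuous_on ({0<..<1} \<times> {0<..<T}) (\<lambda>(r, t). bt r t) \<and>
        continuous_on ({0<..<1} \<times> {0<..<T}) (\<lambda>(r, t). brr r t) \<and>
        continuous_on ({0..<1} \<times> {0<..<T}) (\<lambda>(r, t). br r t) \<and>
        (\<forall>t\<in>{0<..<T}. br 0 t = 0)) \<and>
     (\<forall>t\<in>{0..<T}. b 1 t = 1) \<and>
     (\<forall>r\<in>{0..1}. b r 0 = b0 r)"

definition blows_up_at :: "(real \<Rightarrow> real \<Rightarrow> real) \<Rightarrow> real \<Rightarrow> bool" where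
  "blows_up_at b T \<longleftrightarrow>
     filterlim (\<lambda>t. Sup ((\<lambda>r. b r t) ` {0..1})) at_top (at_left T)"

end

theory Submission
  imports Defs
begin


lemma first_touch:
  fixes \<Psi> :: "'a::metric_space \<Rightarrow> real \<Rightarrow> real"
  assumes K: "compact K" and ac: "a \<le> c"
    and cont: "continuous_on (K \<times> {a..c}) (\<lambda>(x,t). \<Psi> x t)"
    and init: "\<forall>x\<in>K. \<Psi> x a < 0"
    and x0: "x0 \<in> K" and t0: "t0 \<in> {a..c}" and pos: "\<Psi> x0 t0 \<ge> 0"
  shows "\<exists>t1 x1. a < t1 \<and> t1 \<le> c \<and> x1 \<in> K \<and> \<Psi> x1 t1 = 0 \<and>
           (\<forall>x\<in>K. \<forall>t\<in>{a..<t1}. \<Psi> x t < 0) \<and> (\<forall>x\<in>K. \<Psi> x t1 \<le> 0)"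
proof -
  define f where "f = (\<lambda>(x,t). \<Psi> x t)"
  define P where "P = (K \<times> {a..c}) \<inter> f -` {0..}"
  have cK: "compact (K \<times> {a..c})" using K by (simp add: compact_Times)
  have "closed P" unfolding P_def
    by (rule continuous_closed_preimage[OF cont[folded f_def] compact_imp_closed[OF cK] closed_atLeast])
  hence "compact ((K \<times> {a..c}) \<inter> P)" by (rule compact_Int_closed[OF cK])
  moreover have "(K \<times> {a..c}) \<inter> P = P" unfolding P_def by blast
  ultimately have cP: "compact P" by simp
  define S where "S = snd ` P"
  have cS: "compact S" unfolding S_def by (rule compact_continuous_image[OF continuous_on_snd[OF continuous_on_id] cP])
  have ne: "S \<noteq> {}" using x0 t0 pos unfolding S_def P_def f_def by force
  have bdd: "bdd_below S" using cS by (simp add: bounded_imp_bdd_below compact_imp_bounded)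
  define t1 where "t1 = Inf S"
  have t1S: "t1 \<in> S" unfolding t1_def using closed_contains_Inf[OF ne bdd compact_imp_closed[OF cS]] .
  then obtain x1 where x1: "x1 \<in> K" "t1 \<in> {a..c}" "\<Psi> x1 t1 \<ge> 0" unfolding S_def P_def f_def by force
  have ta: "t1 \<noteq> a" using init x1 by force
  have less: "\<forall>x\<in>K. \<forall>t\<in>{a..<t1}. \<Psi> x t < 0"
  proof (intro ballI, rule ccontr)
    fix x t assume "x \<in> K" "t \<in> {a..<t1}" "\<not> \<Psi> x t < 0"
    hence "t \<in> S" using x1 unfolding S_def P_def f_def by force
    hence "t1 \<le> t" unfolding t1_def using bdd by (simp add: cInf_lower)
    with \<open>t \<in> {a..<t1}\<close> show False by simp
  qed
  have le: "\<forall>x\<in>K. \<Psi> x t1 \<le> 0"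
  proof (rule ballI, rule ccontr)
    fix x assume xK: "x \<in> K" and "\<not> \<Psi> x t1 \<le> 0"
    hence p: "\<Psi> x t1 > 0" by simp
    have "continuous_on {a..c} (\<lambda>t. \<Psi> x t)"
    proof (rule continuous_on_compose2[OF cont, of "{a..c}" "\<lambda>t. (x,t)", simplified])
      show "continuous_on {a..c} (Pair x)" by (intro continuous_intros)
      show "Pair x ` {a..c} \<subseteq> K \<times> {a..c}" using xK by auto
    qed
    then obtain \<delta> where \<delta>: "\<delta> > 0" "\<forall>t\<in>{a..c}. dist t t1 < \<delta> \<longrightarrow> dist (\<Psi> x t) (\<Psi> x t1) < \<Psi> x t1"
      using p x1(2) unfolding continuous_on_iff by blast
    define t where "t = max a (t1 - \<delta>/2)"
    have "t \<in> {a..<t1}" using ta x1(2) \<delta>(1) unfolding t_def by auto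
    hence "\<Psi> x t < 0" using less xK by blast
    moreover have "dist (\<Psi> x t) (\<Psi> x t1) < \<Psi> x t1"
      using \<delta> \<open>t \<in> {a..<t1}\<close> x1(2) unfolding t_def by (auto simp: dist_real_def)
    ultimately show False by (simp add: dist_real_def)
  qed
  have "\<Psi> x1 t1 = 0" using le x1 by force
  then show ?thesis using less le x1 ta by (intro exI[of _ t1] exI[of _ x1]) auto
qed

lemma interior_max_deriv:
  fixes f f' :: "real \<Rightarrow> real"
  assumes "a < x" "x < c"
    and d1: "\<And>y. y \<in> {a<..<c} \<Longrightarrow> (f has_real_derivative f' y) (at y)"
    and d2: "(f' has_real_derivative f2) (at x)"
    and mx: "\<And>y. y \<in> {a<..<c} \<Longrightarrow> f y \<le> f x"
  shows "f' x = 0 \<and> f2 \<le> 0"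
proof -
  have z: "f' x = 0"
  proof (rule DERIV_local_max[OF d1[of x]])
    show "x \<in> {a<..<c}" using assms by auto
    show "0 < min (x-a) (c-x)" using assms by auto
    show "\<forall>y. \<bar>x - y\<bar> < min (x - a) (c - x) \<longrightarrow> f y \<le> f x" using mx by (auto simp: abs_less_iff)
  qed
  moreover have "f2 \<le> 0"
  proof (rule ccontr)
    assume "\<not> f2 \<le> 0"
    then obtain d where d: "d > 0" "\<forall>h>0. h < d \<longrightarrow> f' x < f' (x + h)"
      using DERIV_pos_inc_right[OF d2] by force
    define h where "h = min (d/2) ((c-x)/2)"
    have h1: "h \<le> d/2" "h \<le> (c-x)/2" unfolding h_def by (rule min.cobounded1, rule min.cobounded2)
  have h0: "h > 0" unfolding h_def using d assms by simp
    have h: "h > 0" "h < d" "x + h < c" using h0 h1 d assms by auto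
    obtain z where zz: "z > x" "z < x + h" "f (x+h) - f x = (x + h - x) * f' z"
      using MVT2[of x "x+h" f f'] h assms d1 by force
    have "f' z > 0" using d(2)[rule_format, of "z - x"] zz h z by auto
    hence "h * f' z > 0" using h by simp
    hence "f (x+h) > f x" using zz by simp
    moreover have "f (x+h) \<le> f x" using mx[of "x+h"] h assms by auto
    ultimately show False by simp
  qed
  ultimately show ?thesis by simp
qed

lemma boundary_pos_deriv:
  fixes f :: "real \<Rightarrow> real"
  assumes der: "(f has_real_derivative l) (at x within {x..c})" and "l > 0" and "x < e" "e \<le> c"
  shows "\<exists>y. x < y \<and> y < e \<and> f x < f y"
proof -
  obtain d where d: "d > 0" "\<forall>h>0. x + h \<in> {x..c} \<longrightarrow> h < d \<longrightarrow> f x < f (x + h)"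
    using has_real_derivative_pos_inc_right[OF der \<open>l>0\<close>] by blast
  define h where "h = min (d/2) ((e-x)/2)"
  have h1: "h \<le> d/2" "h \<le> (e-x)/2" unfolding h_def by (rule min.cobounded1, rule min.cobounded2)
  have h0: "h > 0" unfolding h_def using d assms by simp
  have "h > 0" "h < d" "x + h < e" using h0 h1 d assms by auto
  thus ?thesis using d(2)[rule_format, of h] assms by (intro exI[of _ "x+h"]) auto
qed

lemma time_touch:
  fixes g :: "real \<Rightarrow> real"
  assumes der: "(g has_real_derivative D) (at t1)" and "a < t1"
    and lt: "\<And>t. t \<in> {a..<t1} \<Longrightarrow> g t < g t1"
  shows "D \<ge> 0"
proof (rule ccontr)
  assume "\<not> D \<ge> 0"
  then obtain d where d: "d > 0" "\<forall>h>0. h < d \<longrightarrow> g t1 < g (t1 - h)"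
    using DERIV_neg_dec_left[OF der] by force
  define h where "h = min (d/2) ((t1-a)/2)"
  have h1: "h \<le> d/2" "h \<le> (t1-a)/2" unfolding h_def by (rule min.cobounded1, rule min.cobounded2)
  have h0: "h > 0" unfolding h_def using d assms by simp
  have "h > 0" "h < d" "t1 - h \<in> {a..<t1}" using h0 h1 d assms by auto
  thus False using d(2) lt by force
qed

lemma small_le0:
  fixes x C :: real
  assumes "C > 0" "\<And>e. 0 < e \<Longrightarrow> e \<le> 1 \<Longrightarrow> x \<le> e * C"
  shows "x \<le> 0"
proof (rule ccontr)
  assume "\<not> x \<le> 0"
  define e where "e = min 1 (x/(2*C))"
  have "0 < e" "e \<le> 1" using \<open>\<not> x \<le> 0\<close> assms unfolding e_def by auto
  hence "x \<le> e * C" using assms by blast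
  moreover have "e * C \<le> (x/(2*C)) * C"
    using assms by (intro mult_right_mono) (auto simp: e_def)
  moreover have "(x/(2*C)) * C = x/2" using assms by simp
  ultimately show False using \<open>\<not> x \<le> 0\<close> by simp
qed




lemma cont_comp_b:
  fixes b :: "real \<Rightarrow> real \<Rightarrow> real"
  assumes bc: "continuous_on ({0..1} \<times> {0..<T}) (\<lambda>(r,t). b r t)"
    and g: "continuous_on S g" and h: "continuous_on S h"
    and dom: "\<And>x. x \<in> S \<Longrightarrow> g x \<in> {0..1} \<and> h x \<in> {0..<T}"
  shows "continuous_on S (\<lambda>x. b (g x) (h x))"
proof -
  have "continuous_on S ((\<lambda>(r,t). b r t) \<circ> (\<lambda>x. (g x, h x)))"
    by (rule continuous_on_compose[OF continuous_on_Pair[OF g h] continuous_on_subset[OF bc]])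
       (use dom in auto)
  thus ?thesis by (simp add: o_def)
qed

lemma bound_b:
  fixes b :: "real \<Rightarrow> real \<Rightarrow> real"
  assumes bc: "continuous_on ({0..1} \<times> {0..<T}) (\<lambda>(r,t). b r t)" and "T' < T"
  shows "\<exists>B\<ge>0. \<forall>r\<in>{0..1}. \<forall>t\<in>{0..T'}. \<bar>b r t\<bar> \<le> B"
proof -
  have "continuous_on ({0..1} \<times> {0..T'}) (\<lambda>(r,t). b r t)"
    by (rule continuous_on_subset[OF bc]) (use assms in auto)
  hence "compact ((\<lambda>(r,t). b r t) ` ({0..1} \<times> {0..T'}))"
    by (intro compact_continuous_image) (auto simp: compact_Times)
  then obtain B where B: "\<forall>y\<in>(\<lambda>(r,t). b r t) ` ({0..1} \<times> {0..T'}). norm y \<le> B"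
    using compact_imp_bounded bounded_iff by metis
  show ?thesis
    by (rule exI[of _ "max B 0"]) (use B in force)
qed




locale solP =
  fixes b bt br brr :: "real \<Rightarrow> real \<Rightarrow> real" and c0 T :: real and d :: nat
  assumes c0: "c0 > 0" and d3: "d \<ge> 3" and T: "T > 0"
  and bcont: "continuous_on ({0..1} \<times> {0..<T}) (\<lambda>(r,t). b r t)"
  and dt: "\<And>r t. r \<in> {0<..<1} \<Longrightarrow> t \<in> {0<..<T} \<Longrightarrow> ((\<lambda>s. b r s) has_real_derivative bt r t) (at t)"
  and dxx: "\<And>r t. r \<in> {0<..<1} \<Longrightarrow> t \<in> {0<..<T} \<Longrightarrow> ((\<lambda>x. br x t) has_real_derivative brr r t) (at r)"
  and pde: "\<And>r t. r \<in> {0<..<1} \<Longrightarrow> t \<in> {0<..<T} \<Longrightarrow>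
     bt r t = c0 * (brr r t + (real d + 1) / r * br r t) + r / real d * b r t * br r t + (b r t)\<^sup>2"
  and dx: "\<And>r t. r \<in> {0..<1} \<Longrightarrow> t \<in> {0<..<T} \<Longrightarrow> ((\<lambda>x. b x t) has_real_derivative br r t) (at r within {0..1})"
  and br0: "\<And>t. t \<in> {0<..<T} \<Longrightarrow> br 0 t = 0"
  and b1: "\<And>t. t \<in> {0..<T} \<Longrightarrow> b 1 t = 1"
  and binit: "\<And>r r'. 0 \<le> r \<Longrightarrow> r \<le> r' \<Longrightarrow> r' \<le> 1 \<Longrightarrow> b r' 0 \<le> b r 0"
begin

lemma dx_int: "r \<in> {0<..<1} \<Longrightarrow> t \<in> {0<..<T} \<Longrightarrow> ((\<lambda>x. b x t) has_real_derivative br r t) (at r)"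
  using dx[of r t] at_within_interior[of r "{0..1}"] by auto

lemma bcont_t: "T' < T \<Longrightarrow> continuous_on ({0..1} \<times> {0..T'}) (\<lambda>(r,t). b r t)"
  by (rule continuous_on_subset[OF bcont]) auto

lemma bge1: assumes t: "t \<in> {0..<T}" and r: "r \<in> {0..1}" shows "b r t \<ge> 1"
proof -
  have key: "1 - b r t < \<epsilon> * (2 - r + t)" if \<epsilon>: "0 < \<epsilon>" "\<epsilon> \<le> 1" for \<epsilon>
  proof -
    define \<Psi> where "\<Psi> = (\<lambda>x s. 1 - b x s - \<epsilon> * (2 - x + s))"
    have neg: "\<forall>x\<in>{0..1}. \<forall>s\<in>{0..t}. \<Psi> x s < 0"
    proof (rule ccontr)
      assume "\<not> ?thesis"
      then obtain x0 s0 where x0: "x0 \<in> {0..1}" "s0 \<in> {0..t}" "\<Psi> x0 s0 \<ge> 0" by force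
      have cont: "continuous_on ({0..1} \<times> {0..t}) (\<lambda>(x,s). \<Psi> x s)"
      proof -
        have "continuous_on ({0..1} \<times> {0..t}) (\<lambda>p. 1 - b (fst p) (snd p) - \<epsilon> * (2 - fst p + snd p))"
          by (intro continuous_intros cont_comp_b[OF bcont]) (use t in auto)
        thus ?thesis unfolding \<Psi>_def by (simp add: case_prod_beta')
      qed
      have init: "\<forall>x\<in>{0..1}. \<Psi> x 0 < 0"
      proof
        fix x :: real assume x: "x \<in> {0..1}"
        have "b x 0 \<ge> b 1 0" using binit[of x 1] x by auto
        hence "b x 0 \<ge> 1" using b1[of 0] T by simp
        moreover have "\<epsilon> * (2 - x + 0) > 0" using x \<epsilon> by (intro mult_pos_pos) auto
        ultimately show "\<Psi> x 0 < 0" unfolding \<Psi>_def by linarith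
      qed
      obtain t1 x1 where tt: "0 < t1" "t1 \<le> t" "x1 \<in> {0..1}" "\<Psi> x1 t1 = 0"
        "\<forall>x\<in>{0..1}. \<forall>s\<in>{0..<t1}. \<Psi> x s < 0" "\<forall>x\<in>{0..1}. \<Psi> x t1 \<le> 0"
        using first_touch[OF compact_Icc _ cont init x0] t by auto
      have t1T: "t1 \<in> {0<..<T}" using tt t by auto
      consider "x1 = 1" | "x1 = 0" | "x1 \<in> {0<..<1}" using tt(3) by fastforce
      then show False
      proof cases
        case 1
        then show False using tt(4) b1[of t1] t1T \<epsilon> unfolding \<Psi>_def by auto
      next
        case 2
        have "((\<lambda>y. \<Psi> y t1) has_real_derivative (- br 0 t1 + \<epsilon>)) (at 0 within {0..1})"
          unfolding \<Psi>_def using dx[of 0 t1] t1T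
          by (auto intro!: derivative_eq_intros)
        hence "((\<lambda>y. \<Psi> y t1) has_real_derivative \<epsilon>) (at 0 within {0..1})" using br0 t1T by simp
        from boundary_pos_deriv[OF this \<open>0<\<epsilon>\<close>, of 1] obtain y where y: "0 < y" "y < 1" "\<Psi> 0 t1 < \<Psi> y t1" by auto
        have "\<Psi> y t1 \<le> 0" using tt(6) y by auto
        then show False using tt(4) 2 y by simp
      next
        case 3
        have m: "- br x1 t1 + \<epsilon> = 0 \<and> - brr x1 t1 \<le> 0"
        proof (rule interior_max_deriv[of 0 x1 1 "\<lambda>y. \<Psi> y t1" "\<lambda>y. - br y t1 + \<epsilon>"])
          show "0 < x1" "x1 < 1" using 3 by auto
          show "((\<lambda>y. \<Psi> y t1) has_real_derivative - br y t1 + \<epsilon>) (at y)" if "y \<in> {0<..<1}" for y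
            unfolding \<Psi>_def using dx_int[OF that t1T] by (auto intro!: derivative_eq_intros)
          show "((\<lambda>y. - br y t1 + \<epsilon>) has_real_derivative - brr x1 t1) (at x1)"
            using dxx[OF 3 t1T] by (auto intro!: derivative_eq_intros)
          show "\<Psi> y t1 \<le> \<Psi> x1 t1" if "y \<in> {0<..<1}" for y using tt(4,6) that by auto
        qed
        have tm: "- bt x1 t1 - \<epsilon> \<ge> 0"
        proof (rule time_touch[of "\<lambda>s. \<Psi> x1 s" _ t1 0])
          show "((\<lambda>s. \<Psi> x1 s) has_real_derivative - bt x1 t1 - \<epsilon>) (at t1)"
            unfolding \<Psi>_def using dt[OF 3 t1T] by (auto intro!: derivative_eq_intros)
          show "0 < t1" by fact
          show "\<Psi> x1 s < \<Psi> x1 t1" if "s \<in> {0..<t1}" for s using tt(3,4,5) that by auto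
        qed
        have e: "bt x1 t1 = c0 * (brr x1 t1 + (real d + 1) / x1 * \<epsilon>) + x1 / real d * b x1 t1 * \<epsilon> + (b x1 t1)\<^sup>2"
          using pde[OF 3 t1T] m by simp
        have "c0 * (brr x1 t1 + (real d + 1) / x1 * \<epsilon>) \<ge> 0" using c0 m 3 \<epsilon> by (auto intro!: mult_nonneg_nonneg)
        define \<beta> where "\<beta> = x1 / real d * \<epsilon>"
        have \<beta>: "0 \<le> \<beta>" "\<beta> \<le> \<epsilon>"
        proof -
          show "0 \<le> \<beta>" unfolding \<beta>_def using 3 \<epsilon> by auto
          have "x1 / real d \<le> 1" using 3 d3 by (auto simp: divide_le_eq)
          thus "\<beta> \<le> \<epsilon>" unfolding \<beta>_def using \<epsilon> mult_right_mono[of "x1 / real d" 1 \<epsilon>] by auto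
        qed
        have "x1 / real d * b x1 t1 * \<epsilon> + (b x1 t1)\<^sup>2 = (b x1 t1 + \<beta>/2)^2 - \<beta>^2/4"
          unfolding \<beta>_def by (simp add: power2_eq_square algebra_simps)
        moreover have "\<beta>^2/4 \<le> \<epsilon>/4"
        proof -
          have "\<beta> * \<beta> \<le> \<beta> * 1" using \<beta> \<epsilon> by (intro mult_left_mono) auto
          thus ?thesis using \<beta> by (simp add: power2_eq_square)
        qed
        moreover have "(b x1 t1 + \<beta>/2)^2 \<ge> 0" by simp
        ultimately have "bt x1 t1 \<ge> - \<epsilon>/4" using e \<open>c0 * _ \<ge> 0\<close> by linarith
        then show False using tm \<epsilon> by simp
      qed
    qed
    have "\<Psi> r t < 0" using neg r t by auto
    thus ?thesis unfolding \<Psi>_def by simp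
  qed
  have "1 - b r t \<le> 0"
  proof (rule small_le0[of "3 + t"])
    show "0 < 3 + t" using t by simp
    fix e :: real assume "0 < e" "e \<le> 1"
    have "1 - b r t < e * (2 - r + t)" by (rule key) fact+
    also have "\<dots> \<le> e * (3 + t)" using \<open>0<e\<close> r by (intro mult_left_mono) auto
    finally show "1 - b r t \<le> e * (3 + t)" by simp
  qed
  thus ?thesis by simp
qed

end



lemma mono_arith:
  fixes btr btr' brrr brrr' b0 b1 c0 \<eta> r r' B E Kc dd :: real
  assumes c0: "c0 > 0" and dd: "dd \<ge> 3" and rr: "0 < r" "r < r'" "r' < 1" and eta: "0 < \<eta>" "\<eta> \<le> 1"
    and E: "E \<ge> 1" and B: "B \<ge> 0" "\<bar>b0\<bar> \<le> B" "\<bar>b1\<bar> \<le> B"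
    and brr: "brrr \<ge> 0" "brrr' \<le> 0"
    and e0: "btr = c0*(brrr + (dd+1)/r*\<eta>) + r/dd*b0*\<eta> + b0^2"
    and e1: "btr' = c0*(brrr' + (dd+1)/r'*\<eta>) + r'/dd*b1*\<eta> + b1^2"
    and D: "b1 - b0 - \<eta>*(r'-r) - \<eta>*E = 0"
    and tm: "btr' - btr - \<eta>*(Kc*E) \<ge> 0" and Kc: "Kc = 2*(1+3*B)+1"
  shows False
proof -
  define D where "D = b1 - b0"
  have Dv: "D = \<eta>*(r'-r) + \<eta>*E" using D unfolding D_def by simp
  have Dpos: "\<eta>*(r'-r) \<le> D" using Dv eta E by simp
  have Dpos2: "D > 0" using Dv eta E rr by (simp add: add_pos_pos)
  have DE: "D \<le> 2*\<eta>*E"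
  proof -
    have "\<eta>*(r'-r) \<le> \<eta>*1" using eta rr by (intro mult_left_mono) auto
    also have "\<dots> \<le> \<eta>*E" using eta E by (intro mult_left_mono) auto
    finally show ?thesis using Dv by (simp add: mult.commute)
  qed
  have a: "c0 * (brrr' - brrr) \<le> 0" using c0 brr by (simp add: mult_nonneg_nonpos)
  have "1/r' \<le> 1/r" using rr by (simp add: frac_le)
  hence "(dd+1)/r' \<le> (dd+1)/r" using dd rr by (simp add: divide_left_mono)
  hence "(dd+1)/r'*\<eta> \<le> (dd+1)/r*\<eta>" using eta by (intro mult_right_mono) auto
  hence bb: "c0*((dd+1)/r'*\<eta> - (dd+1)/r*\<eta>) \<le> 0" using c0 by (simp add: mult_nonneg_nonpos)
  have c1: "r'/dd*b1*\<eta> - r/dd*b0*\<eta> = (\<eta>/dd*r') * D + (\<eta>/dd)*((r'-r)*b0)"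
    unfolding D_def using dd by (simp add: field_simps)
  have q1: "0 \<le> \<eta>/dd*r'" "\<eta>/dd*r' \<le> 1"
  proof -
    show "0 \<le> \<eta>/dd*r'" using eta dd rr by auto
    have "\<eta>/dd \<le> 1" using eta dd by auto
    thus "\<eta>/dd*r' \<le> 1" using rr eta dd mult_mono[of "\<eta>/dd" 1 r' 1] by auto
  qed
  have t1: "(\<eta>/dd*r') * D \<le> 1 * D" using q1 Dpos2 by (intro mult_right_mono) auto
  have "(r'-r)*b0 \<le> (r'-r)*B" using rr B by (intro mult_left_mono) auto
  hence "(\<eta>/dd)*((r'-r)*b0) \<le> (\<eta>/dd)*((r'-r)*B)" by (rule mult_left_mono) (use eta dd in auto)
  also have "\<dots> \<le> \<eta>*((r'-r)*B)"
    using eta dd rr B by (intro mult_right_mono) (auto simp: divide_le_eq)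
  also have "\<dots> = (\<eta>*(r'-r))*B" by simp
  also have "\<dots> \<le> D*B" using Dpos B by (intro mult_right_mono) auto
  finally have t2: "(\<eta>/dd)*((r'-r)*b0) \<le> D*B" .
  have sq: "b1^2 - b0^2 = D*(b1+b0)" unfolding D_def by (simp add: power2_eq_square algebra_simps)
  have "b1 + b0 \<le> 2*B" using B by auto
  hence t3: "b1^2 - b0^2 \<le> D*(2*B)" unfolding sq using Dpos2 by (intro mult_left_mono) auto
  have "btr' - btr = c0 * (brrr' - brrr) + c0*((dd+1)/r'*\<eta> - (dd+1)/r*\<eta>)
        + (r'/dd*b1*\<eta> - r/dd*b0*\<eta>) + (b1^2 - b0^2)"
    using e0 e1 by (simp add: algebra_simps)
  also have "\<dots> \<le> D + D*B + D*(2*B)" using a bb c1 t1 t2 t3 by linarith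
  also have "\<dots> = D * (1+3*B)" by (simp add: algebra_simps)
  also have "\<dots> \<le> (2*\<eta>*E) * (1+3*B)" using DE B by (intro mult_right_mono) auto
  also have "\<dots> < \<eta>*(Kc*E)"
  proof -
    have "\<eta>*(Kc*E) = (2*\<eta>*E) * (1+3*B) + \<eta>*E" unfolding Kc by (simp add: algebra_simps)
    moreover have "\<eta>*E > 0" using eta E by simp
    ultimately show ?thesis by simp
  qed
  finally show False using tm by simp
qed




context solP begin

lemma mono_b:
  assumes t: "t \<in> {0..<T}" and rr: "0 \<le> r" "r \<le> r'" "r' \<le> 1"
  shows "b r' t \<le> b r t"
proof -
  obtain B where B: "B \<ge> 0" "\<forall>r\<in>{0..1}. \<forall>s\<in>{0..t}. \<bar>b r s\<bar> \<le> B"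
    using bound_b[OF bcont, of t] t by auto
  define Kc where "Kc = 2*(1+3*B)+1"
  define KS where "KS = ({0..1::real} \<times> {0..1::real}) \<inter> {p. fst p \<le> snd p}"
  have cKS: "compact KS" unfolding KS_def
    by (intro compact_Int_closed compact_Times compact_Icc closed_Collect_le continuous_intros)
  have key: "b r' t - b r t < \<eta>*(r'-r) + \<eta>*exp(Kc*t)" if eta: "0 < \<eta>" "\<eta> \<le> 1" for \<eta>
  proof -
    define \<Psi> where "\<Psi> = (\<lambda>p s. b (snd p) s - b (fst p) s - \<eta>*(snd p - fst p) - \<eta>*exp(Kc * s))"
    have neg: "\<forall>p\<in>KS. \<forall>s\<in>{0..t}. \<Psi> p s < 0"
    proof (rule ccontr)
      assume "\<not> ?thesis"
      then obtain x0 s0 where x0: "x0 \<in> KS" "s0 \<in> {0..t}" "\<Psi> x0 s0 \<ge> 0" by force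
      have cont: "continuous_on (KS \<times> {0..t}) (\<lambda>(x,s). \<Psi> x s)"
      proof -
        have "continuous_on (KS \<times> {0..t}) (\<lambda>q. b (snd (fst q)) (snd q) - b (fst (fst q)) (snd q)
               - \<eta>*(snd (fst q) - fst (fst q)) - \<eta>*exp(Kc * snd q))"
          by (intro continuous_intros cont_comp_b[OF bcont]) (use t in \<open>auto simp: KS_def\<close>)
        thus ?thesis unfolding \<Psi>_def by (simp add: case_prod_beta')
      qed
      have init: "\<forall>x\<in>KS. \<Psi> x 0 < 0"
      proof
        fix x :: "real \<times> real" assume x: "x \<in> KS"
        have "b (snd x) 0 \<le> b (fst x) 0" using binit[of "fst x" "snd x"] x by (auto simp: KS_def)
        moreover have "\<eta>*(snd x - fst x) \<ge> 0" using x eta by (auto simp: KS_def)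
        ultimately show "\<Psi> x 0 < 0" unfolding \<Psi>_def using eta by simp
      qed
      obtain t1 x1 where tt: "0 < t1" "t1 \<le> t" "x1 \<in> KS" "\<Psi> x1 t1 = 0"
        "\<forall>x\<in>KS. \<forall>s\<in>{0..<t1}. \<Psi> x s < 0" "\<forall>x\<in>KS. \<Psi> x t1 \<le> 0"
        using first_touch[OF cKS _ cont init x0] t by auto
      have t1T: "t1 \<in> {0<..<T}" using tt t by auto
      obtain r1 r2 where x1: "x1 = (r1, r2)" by (cases x1)
      have r12: "0 \<le> r1" "r1 \<le> r2" "r2 \<le> 1" using tt(3) x1 by (auto simp: KS_def)
      have E1: "exp (Kc*t1) \<ge> 1" using tt B unfolding Kc_def by simp
      have inKS: "(y, z) \<in> KS" if "0 \<le> y" "y \<le> z" "z \<le> 1" for y z using that by (auto simp: KS_def)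
      consider "r1 = r2" | "r1 < r2" "r2 = 1" | "r1 = 0" "0 < r2" "r2 < 1" | "0 < r1" "r1 < r2" "r2 < 1"
        using r12 by fastforce
      then show False
      proof cases
        case 1
        then show False using tt(4) eta x1 unfolding \<Psi>_def by simp
      next
        case 2
        have "b r1 t1 \<ge> 1" using bge1[of t1 r1] t1T r12 by auto
        moreover have "\<eta>*(r2 - r1) \<ge> 0" using 2 eta by simp
        moreover have "\<eta>*exp(Kc*t1) > 0" using eta by simp
        ultimately show False using tt(4) x1 2 b1[of t1] t1T unfolding \<Psi>_def by simp
      next
        case 3
        have "((\<lambda>y. \<Psi> (y, r2) t1) has_real_derivative (- br 0 t1 + \<eta>)) (at 0 within {0..1})"
          unfolding \<Psi>_def using dx[of 0 t1] t1T
          by (auto intro!: derivative_eq_intros)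
        hence "((\<lambda>y. \<Psi> (y, r2) t1) has_real_derivative \<eta>) (at 0 within {0..1})" using br0 t1T by simp
        from boundary_pos_deriv[OF this \<open>0<\<eta>\<close>, of r2] 3 obtain y where y: "0 < y" "y < r2" "\<Psi> (0, r2) t1 < \<Psi> (y, r2) t1" by auto
        have "\<Psi> (y, r2) t1 \<le> 0" using tt(6) inKS[of y r2] y 3 by auto
        then show False using tt(4) 3 y x1 by simp
      next
        case 4
        have ip: "r1 \<in> {0<..<1}" "r2 \<in> {0<..<1}" using 4 by auto
        have m1: "- br r1 t1 + \<eta> = 0 \<and> - brr r1 t1 \<le> 0"
        proof (rule interior_max_deriv[of 0 r1 r2 "\<lambda>y. \<Psi> (y, r2) t1" "\<lambda>y. - br y t1 + \<eta>"])
          show "0 < r1" "r1 < r2" using 4 by auto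
          show "((\<lambda>y. \<Psi> (y, r2) t1) has_real_derivative - br y t1 + \<eta>) (at y)" if "y \<in> {0<..<r2}" for y
            unfolding \<Psi>_def using dx_int[OF _ t1T, of y] that 4 by (auto intro!: derivative_eq_intros)
          show "((\<lambda>y. - br y t1 + \<eta>) has_real_derivative - brr r1 t1) (at r1)"
            using dxx[OF ip(1) t1T] by (auto intro!: derivative_eq_intros)
          show "\<Psi> (y, r2) t1 \<le> \<Psi> (r1, r2) t1" if "y \<in> {0<..<r2}" for y
            using tt(4,6) that x1 inKS[of y r2] 4 by auto
        qed
        have m2: "br r2 t1 - \<eta> = 0 \<and> brr r2 t1 \<le> 0"
        proof (rule interior_max_deriv[of r1 r2 1 "\<lambda>y. \<Psi> (r1, y) t1" "\<lambda>y. br y t1 - \<eta>"])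
          show "r1 < r2" "r2 < 1" using 4 by auto
          show "((\<lambda>y. \<Psi> (r1, y) t1) has_real_derivative br y t1 - \<eta>) (at y)" if "y \<in> {r1<..<1}" for y
            unfolding \<Psi>_def using dx_int[OF _ t1T, of y] that 4 by (auto intro!: derivative_eq_intros)
          show "((\<lambda>y. br y t1 - \<eta>) has_real_derivative brr r2 t1) (at r2)"
            using dxx[OF ip(2) t1T] by (auto intro!: derivative_eq_intros)
          show "\<Psi> (r1, y) t1 \<le> \<Psi> (r1, r2) t1" if "y \<in> {r1<..<1}" for y
            using tt(4,6) that x1 inKS[of r1 y] 4 by auto
        qed
        have tm: "bt r2 t1 - bt r1 t1 - \<eta>*(Kc*exp(Kc*t1)) \<ge> 0"
        proof (rule time_touch[of "\<lambda>s. \<Psi> (r1, r2) s" _ t1 0])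
          show "((\<lambda>s. \<Psi> (r1, r2) s) has_real_derivative bt r2 t1 - bt r1 t1 - \<eta>*(Kc*exp(Kc*t1))) (at t1)"
            unfolding \<Psi>_def using dt[OF ip(2) t1T] dt[OF ip(1) t1T]
            by (auto intro!: derivative_eq_intros)
          show "0 < t1" by fact
          show "\<Psi> (r1, r2) s < \<Psi> (r1, r2) t1" if "s \<in> {0..<t1}" for s using tt(3,4,5) that x1 by auto
        qed
        show False
        proof (rule mono_arith[of c0 "real d" r1 r2 \<eta> "exp(Kc*t1)" B "b r1 t1" "b r2 t1"
              "brr r1 t1" "brr r2 t1" "bt r1 t1" "bt r2 t1" Kc])
          show "c0 > 0" by (rule c0)
          show "3 \<le> real d" using d3 by simp
          show "0 < r1" "r1 < r2" "r2 < 1" "0 < \<eta>" "\<eta> \<le> 1" using 4 eta by auto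
          show "1 \<le> exp(Kc*t1)" by (rule E1)
          show "0 \<le> B" by (rule B(1))
          show "\<bar>b r1 t1\<bar> \<le> B" "\<bar>b r2 t1\<bar> \<le> B" using B(2) 4 tt by auto
          show "0 \<le> brr r1 t1" "brr r2 t1 \<le> 0" using m1 m2 by auto
          show "bt r1 t1 = c0 * (brr r1 t1 + (real d + 1) / r1 * \<eta>) + r1 / real d * b r1 t1 * \<eta> + (b r1 t1)\<^sup>2"
            using pde[OF ip(1) t1T] m1 by simp
          show "bt r2 t1 = c0 * (brr r2 t1 + (real d + 1) / r2 * \<eta>) + r2 / real d * b r2 t1 * \<eta> + (b r2 t1)\<^sup>2"
            using pde[OF ip(2) t1T] m2 by simp
          show "b r2 t1 - b r1 t1 - \<eta> * (r2 - r1) - \<eta> * exp (Kc * t1) = 0"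
            using tt(4) x1 unfolding \<Psi>_def by simp
          show "0 \<le> bt r2 t1 - bt r1 t1 - \<eta> * (Kc * exp (Kc * t1))" using tm by simp
          show "Kc = 2 * (1 + 3 * B) + 1" by (rule Kc_def)
        qed
      qed
    qed
    have "(r, r') \<in> KS" using rr by (auto simp: KS_def)
    hence "\<Psi> (r, r') t < 0" using neg t by auto
    thus ?thesis unfolding \<Psi>_def by simp
  qed
  have "b r' t - b r t \<le> 0"
  proof (rule small_le0[of "1 + exp (Kc*t)"])
    show "0 < 1 + exp (Kc*t)" by (simp add: add_pos_pos)
    fix e :: real assume e: "0 < e" "e \<le> 1"
    have "b r' t - b r t < e*(r'-r) + e*exp(Kc*t)" by (rule key) fact+
    also have "e*(r'-r) \<le> e*1" using e rr by (intro mult_left_mono) auto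
    finally show "b r' t - b r t \<le> e * (1 + exp (Kc*t))" by (simp add: algebra_simps)
  qed
  thus ?thesis by simp
qed

end



context solP begin

lemma final_bound:
  assumes blow: "filterlim (\<lambda>t. Sup ((\<lambda>r. b r t) ` {0..1})) at_top (at_left T)"
    and t0: "t0 \<in> {0..<T}"
  shows "b 0 t0 \<ge> 1 / (T - t0)"
proof (rule ccontr)
  assume nt: "\<not> ?thesis"
  define M0 where "M0 = b 0 t0"
  have lt: "M0 < 1/(T-t0)" using nt unfolding M0_def by simp
  have Tt: "T - t0 > 0" using t0 by simp
  have M1: "M0 \<ge> 1" unfolding M0_def using bge1[OF t0] by simp
  have Mmax: "\<And>r. r \<in> {0..1} \<Longrightarrow> b r t0 \<le> M0" unfolding M0_def using mono_b[OF t0] by auto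
  define \<epsilon> where "\<epsilon> = (1/(T-t0) - M0)/4"
  have eps: "\<epsilon> > 0" using lt unfolding \<epsilon>_def by simp
  define L where "L = 1/(M0 + 2*\<epsilon>)"
  have Lpos: "L > 0" using M1 eps unfolding L_def by simp
  have aux: "\<And>A. M0 < A \<Longrightarrow> M0 + 2*((A - M0)/4) < A" by (simp add: field_simps)
  have "M0 + 2*\<epsilon> < 1/(T-t0)" using aux[OF lt] unfolding \<epsilon>_def .
  hence LT: "L > T - t0" unfolding L_def using M1 eps Tt
    by (simp add: field_simps)
  define k where "k = (1 + L/(T-t0))/2"
  have k1: "k > 1" unfolding k_def using LT Tt by (simp add: field_simps)
  have gap: "L - k*(T-t0) = (L - (T-t0))/2" unfolding k_def using Tt by (simp add: field_simps)
  hence gap_pos: "L - k*(T-t0) > 0" using LT by simp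
  define den where "den = (\<lambda>s. L - k*(s - t0))"
  define z where "z = (\<lambda>s. 1 / den s)"
  define Zm where "Zm = 1/(L - k*(T-t0))"
  have den_bounds: "den s \<ge> L - k*(T-t0)" "den s \<le> L" if "s \<in> {t0..T}" for s
  proof -
    have "k*(s - t0) \<le> k*(T-t0)" "0 \<le> k*(s-t0)" using that k1 by (auto intro: mult_left_mono)
    thus "den s \<ge> L - k*(T-t0)" "den s \<le> L" unfolding den_def by auto
  qed
  have z_le: "z s \<le> Zm" if "s \<in> {t0..T}" for s
    unfolding z_def Zm_def using den_bounds[OF that] gap_pos by (simp add: frac_le)
  have z_ge: "z s \<ge> M0 + 2*\<epsilon>" if "s \<in> {t0..T}" for s
  proof -
    have "1/L \<le> 1/den s" using den_bounds[OF that] gap_pos Lpos by (simp add: frac_le)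
    thus ?thesis unfolding z_def L_def by simp
  qed
  have bnd: "b r s < z s - \<epsilon> * r" if s: "s \<in> {t0..<T}" and r: "r \<in> {0..1}" for r s
  proof -
    define \<Psi> where "\<Psi> = (\<lambda>x s. b x s - z s + \<epsilon> * x)"
    have neg: "\<forall>x\<in>{0..1}. \<forall>u\<in>{t0..s}. \<Psi> x u < 0"
    proof (rule ccontr)
      assume "\<not> ?thesis"
      then obtain x0 s0 where x0: "x0 \<in> {0..1}" "s0 \<in> {t0..s}" "\<Psi> x0 s0 \<ge> 0" by force
      have cont: "continuous_on ({0..1} \<times> {t0..s}) (\<lambda>(x,u). \<Psi> x u)"
      proof -
        have "continuous_on ({0..1} \<times> {t0..s}) (\<lambda>p. b (fst p) (snd p) - 1 / (L - k*(snd p - t0)) + \<epsilon> * fst p)"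
        proof -
          have dp: "L - k * (u - t0) \<noteq> 0" if "u \<in> {t0..s}" for u
          proof -
            have "den u > 0" using den_bounds[of u] gap_pos s that by force
            thus ?thesis unfolding den_def by simp
          qed
          show ?thesis
            by (intro continuous_intros cont_comp_b[OF bcont]) (use s t0 dp in auto)
        qed
        thus ?thesis unfolding \<Psi>_def z_def den_def by (simp add: case_prod_beta')
      qed
      have init: "\<forall>x\<in>{0..1}. \<Psi> x t0 < 0"
      proof
        fix x :: real assume x: "x \<in> {0..1}"
        have ex: "\<epsilon> * x \<le> \<epsilon> * 1" using x eps by (intro mult_left_mono) auto
        have "z t0 \<ge> M0 + 2*\<epsilon>" using z_ge[of t0] t0 by auto
        thus "\<Psi> x t0 < 0" unfolding \<Psi>_def using Mmax[OF x] eps ex by linarith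
      qed
      obtain t1 x1 where tt: "t0 < t1" "t1 \<le> s" "x1 \<in> {0..1}" "\<Psi> x1 t1 = 0"
        "\<forall>x\<in>{0..1}. \<forall>u\<in>{t0..<t1}. \<Psi> x u < 0" "\<forall>x\<in>{0..1}. \<Psi> x t1 \<le> 0"
        using first_touch[OF compact_Icc _ cont init x0] s by auto
      have t1T: "t1 \<in> {0<..<T}" using tt s t0 by auto
      have t1r: "t1 \<in> {t0..T}" using tt s by auto
      consider "x1 = 1" | "x1 = 0" | "x1 \<in> {0<..<1}" using tt(3) by fastforce
      then show False
      proof cases
        case 1
        then show False using tt(4) b1[of t1] t1T z_ge[OF t1r] M1 eps unfolding \<Psi>_def by simp
      next
        case 2
        have "((\<lambda>y. \<Psi> y t1) has_real_derivative (br 0 t1 + \<epsilon>)) (at 0 within {0..1})"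
          unfolding \<Psi>_def using dx[of 0 t1] t1T
          by (auto intro!: derivative_eq_intros)
        hence "((\<lambda>y. \<Psi> y t1) has_real_derivative \<epsilon>) (at 0 within {0..1})" using br0 t1T by simp
        from boundary_pos_deriv[OF this eps, of 1] obtain y where y: "0 < y" "y < 1" "\<Psi> 0 t1 < \<Psi> y t1" by auto
        have "\<Psi> y t1 \<le> 0" using tt(6) y by auto
        then show False using tt(4) 2 y by simp
      next
        case 3
        have m: "br x1 t1 + \<epsilon> = 0 \<and> brr x1 t1 \<le> 0"
        proof (rule interior_max_deriv[of 0 x1 1 "\<lambda>y. \<Psi> y t1" "\<lambda>y. br y t1 + \<epsilon>"])
          show "0 < x1" "x1 < 1" using 3 by auto
          show "((\<lambda>y. \<Psi> y t1) has_real_derivative br y t1 + \<epsilon>) (at y)" if "y \<in> {0<..<1}" for y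
            unfolding \<Psi>_def using dx_int[OF that t1T] by (auto intro!: derivative_eq_intros)
          show "((\<lambda>y. br y t1 + \<epsilon>) has_real_derivative brr x1 t1) (at x1)"
            using dxx[OF 3 t1T] by (auto intro!: derivative_eq_intros)
          show "\<Psi> y t1 \<le> \<Psi> x1 t1" if "y \<in> {0<..<1}" for y using tt(4,6) that by auto
        qed
        have dpos: "den t1 > 0" using den_bounds[OF t1r] gap_pos by simp
        have tm: "bt x1 t1 - k / (den t1)^2 \<ge> 0"
        proof (rule time_touch[of "\<lambda>u. \<Psi> x1 u" _ t1 t0])
          show "((\<lambda>u. \<Psi> x1 u) has_real_derivative bt x1 t1 - k / (den t1)^2) (at t1)"
            unfolding \<Psi>_def z_def den_def using dt[OF 3 t1T] dpos[unfolded den_def]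
            by (auto intro!: derivative_eq_intros simp: power2_eq_square)
          show "t0 < t1" by fact
          show "\<Psi> x1 u < \<Psi> x1 t1" if "u \<in> {t0..<t1}" for u using tt(3,4,5) that by auto
        qed
        have e: "bt x1 t1 = c0 * (brr x1 t1 + (real d + 1) / x1 * (-\<epsilon>)) + x1 / real d * b x1 t1 * (-\<epsilon>) + (b x1 t1)\<^sup>2"
        proof -
          have brv: "br x1 t1 = -\<epsilon>" using m by linarith
          show ?thesis using pde[OF 3 t1T] unfolding brv .
        qed
        have bpos: "b x1 t1 \<ge> 1" using bge1[of t1 x1] t1T 3 by auto
        have p1: "c0 * (brr x1 t1 + (real d + 1) / x1 * (-\<epsilon>)) \<le> 0"
        proof -
          have "(real d + 1) / x1 * \<epsilon> \<ge> 0" using 3 eps by simp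
          hence "brr x1 t1 + (real d + 1) / x1 * (-\<epsilon>) \<le> 0" using m by simp
          thus ?thesis using c0 by (simp add: mult_nonneg_nonpos)
        qed
        have p2: "x1 / real d * b x1 t1 * (-\<epsilon>) \<le> 0"
          using 3 bpos eps by (intro mult_nonneg_nonpos) auto
        have "\<epsilon> * x1 \<ge> 0" using 3 eps by simp
        hence bz: "b x1 t1 \<le> z t1" using tt(4) unfolding \<Psi>_def by linarith
        have "(b x1 t1)^2 \<le> (z t1)^2" using bz bpos by (intro power_mono) auto
        also have "(z t1)^2 = 1 / (den t1)^2" unfolding z_def by (simp add: power_divide)
        also have "\<dots> < k / (den t1)^2" using k1 dpos by (simp add: divide_strict_right_mono)
        finally show False using e p1 p2 tm by linarith
      qed
    qed
    have "\<Psi> r s < 0" using neg r s by auto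
    thus ?thesis unfolding \<Psi>_def by simp
  qed
  have Sbound: "Sup ((\<lambda>r. b r s) ` {0..1}) \<le> Zm" if "s \<in> {t0<..<T}" for s
  proof (rule cSUP_least)
    show "{0..1::real} \<noteq> {}" by simp
    fix r :: real assume r: "r \<in> {0..1}"
    have "b r s < z s - \<epsilon> * r" using bnd[of s r] that r by auto
    also have "\<dots> \<le> z s" using eps r by simp
    also have "\<dots> \<le> Zm" using z_le[of s] that by auto
    finally show "b r s \<le> Zm" by simp
  qed
  have ev1: "eventually (\<lambda>s. Sup ((\<lambda>r. b r s) ` {0..1}) > Zm) (at_left T)"
    using blow unfolding filterlim_at_top_dense by blast
  have ev2: "eventually (\<lambda>s. s \<in> {t0<..<T}) (at_left T)"
    using eventually_at_left_real[of t0 T] Tt by simp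
  have "eventually (\<lambda>s. False) (at_left T)"
    using eventually_conj[OF ev1 ev2] by (rule eventually_mono) (use Sbound in force)
  thus False by (simp add: trivial_limit_at_left_real)
qed

end

theorem lemma4p3:
  fixes d :: nat and \<Theta> T :: real
    and b0 b0' b0'' :: "real \<Rightarrow> real" and b :: "real \<Rightarrow> real \<Rightarrow> real"
  assumes "d > 2" and "\<Theta> > 0"
    and "\<And>r. r \<in> {0..1} \<Longrightarrow> (b0 has_real_derivative b0' r) (at r within {0..1})"
    and "\<And>r. r \<in> {0..1} \<Longrightarrow> (b0' has_real_derivative b0'' r) (at r within {0..1})"
    and "continuous_on {0..1} b0''"
    and "\<And>r. r \<in> {0<..<1} \<Longrightarrow> r / real d * b0' r + b0 r \<ge> 0"
    and "\<And>r. r \<in> {0<..<1} \<Longrightarrow> b0' r \<le> 0"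
    and "0 < T"
    and "classical_solution_P d \<Theta> b0 b T"
    and "blows_up_at b T"
  shows "\<forall>t\<in>{0..<T}. b 0 t \<ge> 1 / (T - t)"
proof -
  note sol = assms(9)[unfolded classical_solution_P_def]
  obtain bt br brr where
    h1: "\<forall>r\<in>{0<..<1}. \<forall>t\<in>{0<..<T}.
           ((\<lambda>s. b r s) has_real_derivative bt r t) (at t) \<and>
           ((\<lambda>x. br x t) has_real_derivative brr r t) (at r) \<and>
           bt r t = chi d * \<Theta> * (brr r t + (real d + 1) / r * br r t)
                    + r / real d * b r t * br r t + (b r t)\<^sup>2"
    and h2: "\<forall>r\<in>{0..<1}. \<forall>t\<in>{0<..<T}.
           ((\<lambda>x. b x t) has_real_derivative br r t) (at r within {0..1})"
    and h3: "\<forall>t\<in>{0<..<T}. br 0 t = 0"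
    using sol by blast
  have bc: "continuous_on ({0..1} \<times> {0..<T}) (\<lambda>(r, t). b r t)" using sol by blast
  have hb1: "\<forall>t\<in>{0..<T}. b 1 t = 1" using sol by blast
  have hb0: "\<forall>r\<in>{0..1}. b r 0 = b0 r" using sol by blast
  have b0mono: "b0 r' \<le> b0 r" if "0 \<le> r" "r \<le> r'" "r' \<le> 1" for r r'
  proof (cases "r = r'")
    case True thus ?thesis by simp
  next
    case False
    hence lt: "r < r'" using that by simp
    have c01: "continuous_on {0..1} b0"
      using assms(3) by (intro DERIV_continuous_on) auto
    have "continuous_on {r..r'} b0" by (rule continuous_on_subset[OF c01]) (use that in auto)
    moreover have "b0 differentiable (at x)" if "r < x" "x < r'" for x
    proof -
      have "(b0 has_real_derivative b0' x) (at x)"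
        using assms(3)[of x] at_within_interior[of x "{0..1::real}"] that \<open>0 \<le> r\<close> \<open>r' \<le> 1\<close> by auto
      thus ?thesis by (auto simp: real_differentiable_def)
    qed
    ultimately obtain l z where lz: "r < z" "z < r'" "DERIV b0 z :> l" "b0 r' - b0 r = (r' - r) * l"
      using MVT[OF lt] by blast
    have "(b0 has_real_derivative b0' z) (at z)"
      using assms(3)[of z] at_within_interior[of z "{0..1::real}"] lz that by auto
    hence "l = b0' z" using DERIV_unique lz(3) by blast
    hence "l \<le> 0" using assms(7)[of z] lz that by auto
    hence "(r' - r) * l \<le> 0" using lt by (simp add: mult_nonneg_nonpos)
    thus ?thesis using lz by simp
  qed
  interpret S: solP b bt br brr "chi d * \<Theta>" T d
  proof
    show "chi d * \<Theta> > 0" using assms(2) by (simp add: chi_def)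
    show "d \<ge> 3" using assms(1) by simp
    show "T > 0" by fact
    show "continuous_on ({0..1} \<times> {0..<T}) (\<lambda>(r,t). b r t)" by (rule bc)
    show "\<And>r t. r \<in> {0<..<1} \<Longrightarrow> t \<in> {0<..<T} \<Longrightarrow> ((\<lambda>s. b r s) has_real_derivative bt r t) (at t)"
      using h1 by blast
    show "\<And>r t. r \<in> {0<..<1} \<Longrightarrow> t \<in> {0<..<T} \<Longrightarrow> ((\<lambda>x. br x t) has_real_derivative brr r t) (at r)"
      using h1 by blast
    show "\<And>r t. r \<in> {0<..<1} \<Longrightarrow> t \<in> {0<..<T} \<Longrightarrow>
     bt r t = chi d * \<Theta> * (brr r t + (real d + 1) / r * br r t) + r / real d * b r t * br r t + (b r t)\<^sup>2"
      using h1 by blast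
    show "\<And>r t. r \<in> {0..<1} \<Longrightarrow> t \<in> {0<..<T} \<Longrightarrow> ((\<lambda>x. b x t) has_real_derivative br r t) (at r within {0..1})"
      using h2 by blast
    show "\<And>t. t \<in> {0<..<T} \<Longrightarrow> br 0 t = 0" using h3 by blast
    show "\<And>t. t \<in> {0..<T} \<Longrightarrow> b 1 t = 1" using hb1 by blast
    show "\<And>r r'. 0 \<le> r \<Longrightarrow> r \<le> r' \<Longrightarrow> r' \<le> 1 \<Longrightarrow> b r' 0 \<le> b r 0"
      using hb0 b0mono by simp
  qed
  show ?thesis
    using S.final_bound assms(10)[unfolded blows_up_at_def] by blast
qed

end
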